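(* Let $\Gamma_M$ ($M>0$) be a family of nonatomic routing games with a single OD pair with demand $M$, sharing the same graph, path set and edge costs $(c_e)_{e\in\mathcal E}$. Suppose that for every edge $e$ there is $q_e\ge 0$ such that $\lim_{x\to \infty}c_e(x)/x^{q_e}$ is finite and nonzero. Then $\mathrm{PoA}(\Gamma_M)\to 1$ as $M\to \infty$.
   Context: A nonatomic routing game with a single OD pair consists of a finite directed multigraph with edge set $\mathcal E$, a nonempty finite set $\mathcal P$ of paths from an origin to a destination, a demand $M>0$, and continuous nondecreasing edge costs $c_e:[0,\infty)\to[0,\infty)$. Feasible flows: $f\in\mathbb R_+^{\mathcal P}$ with $\sum_p f_p=M$; loads $x_e=\sum_{p\ni e}f_p$; path costs $c_p(f)=\sum_{e\in p}c_e(x_e)$. A Wardrop equilibrium is a feasible $f^*$ with $c_p(f^* )\le c_{p'}(f^* )$ whenever $f^*_p>0$. Social cost $L(x)=\sum_e x_ec_e(x_e)$; $\mathrm{Opt}$ is its minimum over feasible loads, $\mathrm{Eq}=L(x^* )$ at an equilibrium load, and $\mathrm{PoA}=\mathrm{Eq}/\mathrm{Opt}$; it is assumed that $\mathrm{Opt}>0$ (otherwise $\mathrm{PoA}:=1$). *)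

theory Defs
  imports "HOL-Analysis.Analysis"
begin

definition is_od_path ::
  "('e \<Rightarrow> 'v) \<Rightarrow> ('e \<Rightarrow> 'v) \<Rightarrow> 'e set \<Rightarrow> 'v \<Rightarrow> 'v \<Rightarrow> 'e list \<Rightarrow> bool" where
  "is_od_path src tgt E orig dest p \<longleftrightarrow>
     p \<noteq> [] \<and> set p \<subseteq> E \<and>
     src (hd p) = orig \<and> tgt (last p) = dest \<and>
     (\<forall>i. Suc i < length p \<longrightarrow> tgt (p ! i) = src (p ! Suc i)) \<and>
     distinct (src (hd p) # map tgt p)"

definition feasible :: "'e list set \<Rightarrow> real \<Rightarrow> ('e list \<Rightarrow> real) \<Rightarrow> bool" where
  "feasible P M f \<longleftrightarrow> (\<forall>p\<in>P. f p \<ge> 0) \<and> (\<Sum>p\<in>P. f p) = M"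

definition load :: "'e list set \<Rightarrow> ('e list \<Rightarrow> real) \<Rightarrow> 'e \<Rightarrow> real" where
  "load P f e = (\<Sum>p\<in>{p\<in>P. e \<in> set p}. f p)"

definition path_cost ::
  "('e \<Rightarrow> real \<Rightarrow> real) \<Rightarrow> 'e list set \<Rightarrow> ('e list \<Rightarrow> real) \<Rightarrow> 'e list \<Rightarrow> real" where
  "path_cost c P f p = (\<Sum>e\<in>set p. c e (load P f e))"

definition wardrop_eq ::
  "('e \<Rightarrow> real \<Rightarrow> real) \<Rightarrow> 'e list set \<Rightarrow> real \<Rightarrow> ('e list \<Rightarrow> real) \<Rightarrow> bool" where
  "wardrop_eq c P M f \<longleftrightarrow> feasible P M f \<and>
     (\<forall>p\<in>P. \<forall>p'\<in>P. f p > 0 \<longrightarrow> path_cost c P f p \<le> path_cost c P f p')"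

definition social_cost :: "'e set \<Rightarrow> ('e \<Rightarrow> real \<Rightarrow> real) \<Rightarrow> ('e \<Rightarrow> real) \<Rightarrow> real" where
  "social_cost E c x = (\<Sum>e\<in>E. x e * c e (x e))"

definition opt_cost ::
  "'e set \<Rightarrow> ('e \<Rightarrow> real \<Rightarrow> real) \<Rightarrow> 'e list set \<Rightarrow> real \<Rightarrow> real" where
  "opt_cost E c P M = Inf {social_cost E c (load P f) | f. feasible P M f}"

definition poa ::
  "'e set \<Rightarrow> ('e \<Rightarrow> real \<Rightarrow> real) \<Rightarrow> 'e list set \<Rightarrow> real \<Rightarrow> ('e list \<Rightarrow> real) \<Rightarrow> real" where
  "poa E c P M feq = (if opt_cost E c P M = 0 then 1
                      else social_cost E c (load P feq) / opt_cost E c P M)"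

end

theory Submission
  imports Defs
begin


lemma my_powr_at_top:
  assumes "(p::real) > 0"
  shows   "filterlim (\<lambda>x. x powr p) at_top at_top"
proof (subst filterlim_cong[OF refl refl])
  show "LIM x at_top. exp (p * ln x) :> at_top"
    by (rule filterlim_compose[OF exp_at_top filterlim_tendsto_pos_mult_at_top[OF tendsto_const]])
       (simp_all add: ln_at_top assms)
  show "eventually (\<lambda>x. x powr p = exp (p * ln x)) at_top"
    using eventually_gt_at_top[of 0] by eventually_elim (simp add: powr_def)
qed

lemma ev_dom:
  assumes "0 < b" "s < r"
  shows "eventually (\<lambda>M::real. a * M powr s \<le> b * M powr r) at_top"
proof -
  have "eventually (\<lambda>M. M powr (r - s) \<ge> \<bar>a\<bar> / b) at_top"
    using my_powr_at_top[of "r - s"] assms by (simp add: filterlim_at_top)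
  moreover have "eventually (\<lambda>M::real. M > 0) at_top" by (rule eventually_gt_at_top)
  ultimately show ?thesis
  proof eventually_elim
    case (elim M)
    have "M powr r = M powr s * M powr (r - s)" by (simp add: powr_add[symmetric])
    have "a * M powr s \<le> \<bar>a\<bar> * M powr s" by (simp add: mult_right_mono)
    also have "\<dots> \<le> (b * M powr (r - s)) * M powr s"
      using elim assms by (intro mult_right_mono) (auto simp: field_simps)
    also have "\<dots> = b * M powr r" using \<open>M powr r = _\<close> by simp
    finally show ?case .
  qed
qed

lemma young_d:
  fixes a b d :: real
  assumes "0 \<le> a" "0 \<le> b" "0 \<le> d"
  shows "b * a powr d \<le> d/(d+1) * a powr (d+1) + b powr (d+1) / (d+1)"
proof (cases "d = 0")
  case True thus ?thesis using assms by (cases "a = 0") auto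
next
  case False
  hence dp: "d > 0" using assms by simp
  have "b * a powr d \<le> b powr (d+1) / (d+1) + (a powr d) powr ((d+1)/d) / ((d+1)/d)"
    using dp assms by (intro Youngs_inequality) (auto simp: field_simps)
  also have "(a powr d) powr ((d+1)/d) = a powr (d+1)" using dp by (simp add: powr_powr)
  finally show ?thesis using dp by (simp add: field_simps)
qed

lemma edge_asym:
  fixes g :: "real \<Rightarrow> real"
  assumes "q \<ge> 0" "l > 0" "((\<lambda>x. g x / x powr q) \<longlongrightarrow> l) at_top" "\<eta> > 0"
  shows "\<exists>Z\<ge>1. \<forall>z\<ge>Z. (1-\<eta>)*l*z powr q \<le> g z \<and> g z \<le> (1+\<eta>)*l*z powr q"
proof -
  have "eventually (\<lambda>x. dist (g x / x powr q) l < \<eta> * l) at_top"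
    using assms tendstoD by (simp add: tendsto_iff)
  then obtain N where N: "\<And>x. x \<ge> N \<Longrightarrow> \<bar>g x / x powr q - l\<bar> < \<eta> * l"
    by (auto simp: eventually_at_top_linorder dist_real_def)
  show ?thesis
  proof (intro exI[of _ "max N 1"] conjI allI impI)
    fix z assume z: "max N 1 \<le> z"
    hence zp: "z powr q > 0" by simp
    have h: "\<bar>g z / z powr q - l\<bar> < \<eta> * l" using N z by simp
    have e: "g z = (g z / z powr q) * z powr q" using zp by simp
    have h1: "g z / z powr q - l < \<eta>*l" "-(\<eta>*l) < g z / z powr q - l" using h abs_less_iff by auto
    have a1: "(1-\<eta>)*l \<le> g z / z powr q" using h1 by (simp add: left_diff_distrib)
    have a2: "g z / z powr q \<le> (1+\<eta>)*l" using h1 by (simp add: distrib_right)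
    have "(1-\<eta>)*l*z powr q \<le> (g z / z powr q) * z powr q" using a1 zp by (intro mult_right_mono) auto
    thus "(1-\<eta>)*l*z powr q \<le> g z" using zp by simp
    have "(g z / z powr q) * z powr q \<le> (1+\<eta>)*l*z powr q" using a2 zp by (intro mult_right_mono) auto
    thus "g z \<le> (1+\<eta>)*l*z powr q" using zp by simp
  qed simp
qed




locale rg =
  fixes E :: "'e set" and P :: "'e list set" and c :: "'e \<Rightarrow> real \<Rightarrow> real"
    and feq :: "real \<Rightarrow> 'e list \<Rightarrow> real" and q l :: "'e \<Rightarrow> real"
  assumes finE: "finite E" and finP: "finite P" and Pne: "P \<noteq> {}"
    and paths: "\<And>p. p \<in> P \<Longrightarrow> p \<noteq> [] \<and> set p \<subseteq> E"
    and mono: "\<And>e. e \<in> E \<Longrightarrow> mono_on {0..} (c e)"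
    and nonneg: "\<And>e x. e \<in> E \<Longrightarrow> x \<ge> 0 \<Longrightarrow> c e x \<ge> 0"
    and qpos: "\<And>e. e \<in> E \<Longrightarrow> q e \<ge> 0" and lpos: "\<And>e. e \<in> E \<Longrightarrow> l e > 0"
    and lim: "\<And>e. e \<in> E \<Longrightarrow> ((\<lambda>x. c e x / x powr q e) \<longlongrightarrow> l e) at_top"
    and weq: "\<And>M. M > 0 \<Longrightarrow> wardrop_eq c P M (feq M)"
begin

lemma monoD': "e \<in> E \<Longrightarrow> 0 \<le> a \<Longrightarrow> a \<le> b \<Longrightarrow> c e a \<le> c e b"
  using mono by (auto simp: mono_on_def)

lemma load_nonneg: "feasible P M f \<Longrightarrow> load P f e \<ge> 0"
  unfolding load_def feasible_def by (auto intro: sum_nonneg)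

lemma load_le: "feasible P M f \<Longrightarrow> load P f e \<le> M"
proof -
  assume f: "feasible P M f"
  have "load P f e \<le> (\<Sum>p\<in>P. f p)" unfolding load_def
    using f finP by (intro sum_mono2) (auto simp: feasible_def)
  thus ?thesis using f by (simp add: feasible_def)
qed

lemma load_ge: "feasible P M f \<Longrightarrow> p \<in> P \<Longrightarrow> e \<in> set p \<Longrightarrow> f p \<le> load P f e"
  unfolding load_def feasible_def using finP
  by (intro member_le_sum) auto

lemma swap_load: "(\<Sum>e\<in>E. load P f e * h e) = (\<Sum>p\<in>P. f p * (\<Sum>e\<in>set p. h e))"
proof -
  have "(\<Sum>e\<in>E. load P f e * h e) = (\<Sum>e\<in>E. \<Sum>p\<in>{p. p \<in> P \<and> e \<in> set p}. f p * h e)"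
    by (simp add: load_def sum_distrib_right)
  also have "\<dots> = (\<Sum>p\<in>P. \<Sum>e\<in>{e. e \<in> E \<and> e \<in> set p}. f p * h e)"
    using finE finP by (rule sum.swap_restrict)
  also have "\<dots> = (\<Sum>p\<in>P. f p * (\<Sum>e\<in>set p. h e))"
  proof (rule sum.cong[OF refl])
    fix p assume "p \<in> P"
    hence "{e. e \<in> E \<and> e \<in> set p} = set p" using paths by auto
    thus "(\<Sum>e\<in>{e. e \<in> E \<and> e \<in> set p}. f p * h e) = f p * (\<Sum>e\<in>set p. h e)"
      by (simp add: sum_distrib_left)
  qed
  finally show ?thesis .
qed

lemma social_paths: "social_cost E c (load P f) = (\<Sum>p\<in>P. f p * path_cost c P f p)"
  unfolding social_cost_def path_cost_def by (rule swap_load)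

lemma social_nonneg: "feasible P M f \<Longrightarrow> social_cost E c (load P f) \<ge> 0"
  unfolding social_cost_def using load_nonneg nonneg by (auto intro!: sum_nonneg)

lemma term_le_social: "feasible P M f \<Longrightarrow> e \<in> E \<Longrightarrow>
   load P f e * c e (load P f e) \<le> social_cost E c (load P f)"
  unfolding social_cost_def using load_nonneg nonneg finE
  by (intro member_le_sum) auto

lemma feasible_ex: "M \<ge> 0 \<Longrightarrow> feasible P M (\<lambda>p. M / card P)"
  using finP Pne by (auto simp: feasible_def)

definition "OS M = {social_cost E c (load P f) | f. feasible P M f}"

lemma OS_ne: "M \<ge> 0 \<Longrightarrow> OS M \<noteq> {}"
  using feasible_ex unfolding OS_def by blast

lemma OS_bdd: "bdd_below (OS M)"
  unfolding OS_def bdd_below_def using social_nonneg by blast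

lemma opt_le: "feasible P M f \<Longrightarrow> opt_cost E c P M \<le> social_cost E c (load P f)"
  unfolding opt_cost_def using OS_bdd[of M] unfolding OS_def
  by (intro cInf_lower) auto

lemma opt_near: "M \<ge> 0 \<Longrightarrow> \<exists>g. feasible P M g \<and> social_cost E c (load P g) \<le> opt_cost E c P M + 1"
proof -
  assume M: "M \<ge> 0"
  have "Inf (OS M) < opt_cost E c P M + 1" by (simp add: opt_cost_def OS_def)
  then obtain v where "v \<in> OS M" "v < opt_cost E c P M + 1"
    using cInf_lessD[OF OS_ne[OF M]] by blast
  thus ?thesis unfolding OS_def by auto
qed

lemma opt_ge: "M \<ge> 0 \<Longrightarrow> (\<And>f. feasible P M f \<Longrightarrow> b \<le> social_cost E c (load P f)) \<Longrightarrow> b \<le> opt_cost E c P M"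
  unfolding opt_cost_def using OS_ne unfolding OS_def
  by (intro cInf_greatest) auto

definition "x M e = load P (feq M) e"
definition "pc M p = path_cost c P (feq M) p"
definition "Cm M = Min (pc M ` P)"

lemma feq_feas: "M > 0 \<Longrightarrow> feasible P M (feq M)"
  using weq by (simp add: wardrop_eq_def)

lemma used_Cm: "M > 0 \<Longrightarrow> p \<in> P \<Longrightarrow> feq M p > 0 \<Longrightarrow> pc M p = Cm M"
proof -
  assume M: "M > 0" and p: "p \<in> P" "feq M p > 0"
  have "\<forall>p'\<in>P. pc M p \<le> pc M p'" using weq[OF M] p by (auto simp: wardrop_eq_def pc_def)
  hence "pc M p \<le> Cm M" unfolding Cm_def using finP Pne by (auto intro: Min.boundedI)
  moreover have "Cm M \<le> pc M p" unfolding Cm_def using finP p by auto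
  ultimately show ?thesis by simp
qed

lemma Eq_eq: "M > 0 \<Longrightarrow> social_cost E c (load P (feq M)) = M * Cm M"
proof -
  assume M: "M > 0"
  have "social_cost E c (load P (feq M)) = (\<Sum>p\<in>P. feq M p * pc M p)"
    by (simp add: social_paths pc_def)
  also have "\<dots> = (\<Sum>p\<in>P. feq M p * Cm M)"
  proof (rule sum.cong[OF refl])
    fix p assume p: "p \<in> P"
    show "feq M p * pc M p = feq M p * Cm M"
      using used_Cm[OF M p] feq_feas[OF M] p by (cases "feq M p > 0") (auto simp: feasible_def)
  qed
  also have "\<dots> = M * Cm M" using feq_feas[OF M] by (simp add: sum_distrib_right[symmetric] feasible_def)
  finally show ?thesis .
qed

lemma VI: assumes M: "M > 0" and g: "feasible P M g"
  shows "social_cost E c (load P (feq M)) \<le> (\<Sum>e\<in>E. load P g e * c e (x M e))"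
proof -
  have "(\<Sum>e\<in>E. load P g e * c e (x M e)) = (\<Sum>p\<in>P. g p * pc M p)"
    by (simp add: swap_load pc_def path_cost_def x_def)
  also have "\<dots> \<ge> (\<Sum>p\<in>P. g p * Cm M)"
    using g finP unfolding Cm_def feasible_def by (intro sum_mono mult_left_mono) auto
  also have "(\<Sum>p\<in>P. g p * Cm M) = M * Cm M" using g by (simp add: sum_distrib_right[symmetric] feasible_def)
  finally show ?thesis using Eq_eq[OF M] by simp
qed

lemma edge_le_Cm: assumes M: "M > 0" and e: "e \<in> E" and xp: "x M e > 0"
  shows "c e (x M e) \<le> Cm M"
proof -
  obtain p where p: "p \<in> P" "e \<in> set p" "feq M p > 0"
  proof (rule ccontr)
    assume "\<not> thesis"
    hence "\<forall>p\<in>{p \<in> P. e \<in> set p}. feq M p \<le> 0" using that by force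
    hence "x M e \<le> 0" unfolding x_def load_def by (intro sum_nonpos) auto
    thus False using xp by simp
  qed
  have "c e (x M e) \<le> (\<Sum>e'\<in>set p. c e' (x M e'))"
    using p paths[OF p(1)] nonneg load_nonneg[OF feq_feas[OF M]]
    by (intro member_le_sum) (auto simp: x_def)
  also have "\<dots> = pc M p" by (simp add: pc_def path_cost_def x_def)
  finally show ?thesis using used_Cm[OF M p(1,3)] by simp
qed

lemma Cm_le: assumes M: "M > 0" and p0: "p0 \<in> P" shows "Cm M \<le> (\<Sum>e\<in>set p0. c e M)"
proof -
  have "Cm M \<le> pc M p0" unfolding Cm_def using finP p0 by auto
  also have "\<dots> = (\<Sum>e\<in>set p0. c e (x M e))" by (simp add: pc_def path_cost_def x_def)
  also have "\<dots> \<le> (\<Sum>e\<in>set p0. c e M)"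
    using paths[OF p0] load_nonneg[OF feq_feas[OF M]] load_le[OF feq_feas[OF M]]
    by (intro sum_mono monoD') (auto simp: x_def)
  finally show ?thesis .
qed

end



lemma small_load:
  assumes "0 \<le> s" "s < r" "\<theta> > 0"
  shows "eventually (\<lambda>M::real. \<forall>z\<ge>0. z powr r \<le> B * M powr s \<longrightarrow> z \<le> \<theta>*M) at_top"
proof -
  have r: "r > 0" using assms by simp
  have "eventually (\<lambda>M::real. B * M powr s \<le> (\<theta> powr r / 2) * M powr r) at_top"
    using assms by (intro ev_dom) auto
  moreover have "eventually (\<lambda>M::real. M > 0) at_top" by (rule eventually_gt_at_top)
  ultimately show ?thesis
  proof eventually_elim
    case (elim M)
    show ?case
    proof (intro allI impI)
      fix z :: real assume z: "z \<ge> 0" "z powr r \<le> B * M powr s"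
      show "z \<le> \<theta>*M"
      proof (rule ccontr)
        assume "\<not> z \<le> \<theta>*M"
        hence "(\<theta>*M) powr r < z powr r" using elim assms r by (intro powr_less_mono2) auto
        hence "\<theta> powr r * M powr r < z powr r" using elim assms by (simp add: powr_mult)
        moreover have "(\<theta> powr r / 2) * M powr r < \<theta> powr r * M powr r" using elim assms by simp
        ultimately show False using z elim by linarith
      qed
    qed
  qed
qed

context rg begin

definition "Q p = Max (q ` set p)"
definition "d = Min (Q ` P)"

lemma E_ne: "E \<noteq> {}" using Pne paths by fastforce

lemma Q_in: "p \<in> P \<Longrightarrow> Q p \<in> q ` set p"
  unfolding Q_def using paths by (intro Max_in) auto

lemma d_p0: obtains p0 where "p0 \<in> P" "\<And>e. e \<in> set p0 \<Longrightarrow> q e \<le> d"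
proof -
  have "d \<in> Q ` P" unfolding d_def using finP Pne by (intro Min_in) auto
  then obtain p0 where p0: "p0 \<in> P" "Q p0 = d" by auto
  have "\<And>e. e \<in> set p0 \<Longrightarrow> q e \<le> Q p0" unfolding Q_def by (intro Max_ge) auto
  hence "\<And>e. e \<in> set p0 \<Longrightarrow> q e \<le> d" using p0 by simp
  thus ?thesis using that p0 by blast
qed

lemma d_edge: "p \<in> P \<Longrightarrow> \<exists>e\<in>set p. q e \<ge> d"
proof -
  assume p: "p \<in> P"
  have "d \<le> Q p" unfolding d_def using finP p by auto
  thus ?thesis using Q_in[OF p] by auto
qed

lemma d_nonneg: "d \<ge> 0"
proof -
  have "d \<in> Q ` P" unfolding d_def using finP Pne by (intro Min_in) auto
  then obtain p where p: "p \<in> P" "d = Q p" by auto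
  then obtain e where e: "e \<in> set p" "q e = d" using Q_in[OF p(1)] by auto
  hence "e \<in> E" using paths p by auto
  thus ?thesis using qpos e by fastforce
qed

lemma ev_Cm: "\<exists>K\<ge>0. eventually (\<lambda>M. Cm M \<le> K * M powr d) at_top"
proof -
  obtain p0 where p0: "p0 \<in> P" "\<And>e. e \<in> set p0 \<Longrightarrow> q e \<le> d" using d_p0 by blast
  have E0: "set p0 \<subseteq> E" using paths p0 by auto
  have "\<forall>e\<in>set p0. eventually (\<lambda>M. c e M \<le> 2 * l e * M powr d) at_top"
  proof
    fix e assume e: "e \<in> set p0"
    hence eE: "e \<in> E" using E0 by auto
    obtain Z where Z: "Z \<ge> 1" "\<And>z. z \<ge> Z \<Longrightarrow> c e z \<le> (1+1)*l e*z powr q e"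
      using edge_asym[OF qpos[OF eE] lpos[OF eE] lim[OF eE], of 1] by auto
    show "eventually (\<lambda>M. c e M \<le> 2 * l e * M powr d) at_top"
      using eventually_ge_at_top[of Z]
    proof eventually_elim
      case (elim M)
      have "c e M \<le> 2 * l e * M powr q e" using Z elim by simp
      also have "\<dots> \<le> 2 * l e * M powr d"
        using lpos[OF eE] p0(2)[OF e] Z elim by (intro mult_left_mono powr_mono) auto
      finally show ?case .
    qed
  qed
  hence "eventually (\<lambda>M. \<forall>e\<in>set p0. c e M \<le> 2 * l e * M powr d) at_top"
    by (simp add: eventually_ball_finite)
  moreover have "eventually (\<lambda>M::real. M > 0) at_top" by (rule eventually_gt_at_top)
  ultimately have "eventually (\<lambda>M. Cm M \<le> (\<Sum>e\<in>set p0. 2 * l e) * M powr d) at_top"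
  proof eventually_elim
    case (elim M)
    have "Cm M \<le> (\<Sum>e\<in>set p0. c e M)" using Cm_le elim p0 by auto
    also have "\<dots> \<le> (\<Sum>e\<in>set p0. 2 * l e * M powr d)" using elim by (intro sum_mono) auto
    finally show ?case by (simp add: sum_distrib_right)
  qed
  moreover have "(\<Sum>e\<in>set p0. 2 * l e) \<ge> 0" using E0 lpos by (intro sum_nonneg) (auto intro: less_imp_le)
  ultimately show ?thesis by blast
qed

lemma ev_cx: "\<exists>K\<ge>0. eventually (\<lambda>M. M \<ge> 1 \<and> Cm M \<le> K * M powr d \<and> (\<forall>e\<in>E. c e (x M e) \<le> K * M powr d)) at_top"
proof -
  obtain K where K: "K \<ge> 0" "eventually (\<lambda>M. Cm M \<le> K * M powr d) at_top" using ev_Cm by blast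
  define K2 where "K2 = K + (\<Sum>e\<in>E. c e 0)"
  have s0: "(\<Sum>e\<in>E. c e 0) \<ge> 0" using nonneg by (intro sum_nonneg) auto
  have "eventually (\<lambda>M. M \<ge> 1 \<and> Cm M \<le> K2 * M powr d \<and> (\<forall>e\<in>E. c e (x M e) \<le> K2 * M powr d)) at_top"
    using K(2) eventually_ge_at_top[of 1]
  proof eventually_elim
    case (elim M)
    have Md: "M powr d \<ge> 1" using elim d_nonneg by (simp add: ge_one_powr_ge_zero)
    have "0 \<le> (\<Sum>e\<in>E. c e 0) * M powr d" using s0 Md by simp
    hence CK: "Cm M \<le> K2 * M powr d" using elim unfolding K2_def by (simp add: distrib_right)
    have "c e (x M e) \<le> K2 * M powr d" if e: "e \<in> E" for e
    proof (cases "x M e > 0")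
      case True
      thus ?thesis using edge_le_Cm[OF _ e True] elim CK by force
    next
      case False
      moreover have "x M e \<ge> 0" using load_nonneg[OF feq_feas, of M] elim unfolding x_def by simp
      ultimately have "x M e = 0" by simp
      hence "c e (x M e) = c e 0" by simp
      also have "\<dots> \<le> (\<Sum>e\<in>E. c e 0)" using e finE nonneg by (intro member_le_sum) auto
      also have "\<dots> \<le> (\<Sum>e\<in>E. c e 0) * M powr d" using s0 Md by (simp add: mult_le_cancel_left1)
      also have "\<dots> \<le> K2 * M powr d" unfolding K2_def using K Md by (simp add: distrib_right)
      finally show ?thesis .
    qed
    thus ?case using CK elim by auto
  qed
  moreover have "K2 \<ge> 0" using K s0 unfolding K2_def by simp
  ultimately show ?thesis by blast
qed

end


context rg begin

lemma ev_opt: "\<exists>k>0. eventually (\<lambda>M. k * M powr (d+1) \<le> opt_cost E c P M) at_top"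
proof -
  define N where "N = real (card P)"
  have N: "N > 0" unfolding N_def using finP Pne by (simp add: card_gt_0_iff)
  define k where "k = Min ((\<lambda>e. l e / 2 / N powr (q e + 1)) ` E)"
  have kpos: "k > 0" unfolding k_def using finE E_ne lpos N by (subst Min_gr_iff) auto
  have kle: "\<And>e. e \<in> E \<Longrightarrow> k \<le> l e / 2 / N powr (q e + 1)" unfolding k_def using finE by auto
  have "\<forall>e\<in>{e\<in>E. q e \<ge> d}. eventually (\<lambda>M. \<forall>z\<ge>M/N. k * M powr (d+1) \<le> z * c e z) at_top"
  proof
    fix e assume "e \<in> {e\<in>E. q e \<ge> d}"
    hence eE: "e \<in> E" and qd: "q e \<ge> d" by auto
    obtain Z where Z: "Z \<ge> 1" "\<And>z. z \<ge> Z \<Longrightarrow> (1-1/2)*l e*z powr q e \<le> c e z"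
      using edge_asym[OF qpos[OF eE] lpos[OF eE] lim[OF eE], of "1/2"] by auto
    show "eventually (\<lambda>M. \<forall>z\<ge>M/N. k * M powr (d+1) \<le> z * c e z) at_top"
      using eventually_ge_at_top[of "N*Z"] eventually_ge_at_top[of 1]
    proof eventually_elim
      case (elim M)
      have MN: "M/N \<ge> Z" using elim N by (simp add: field_simps)
      show ?case
      proof (intro allI impI)
        fix z assume z: "M/N \<le> z"
        have z0: "z \<ge> 0" "z \<ge> Z" using z MN Z by auto
        have "k * M powr (d+1) \<le> k * M powr (q e + 1)"
          using kpos elim qd by (intro mult_left_mono powr_mono) auto
        also have "\<dots> \<le> (l e / 2 / N powr (q e + 1)) * M powr (q e + 1)"
          using kle[OF eE] by (intro mult_right_mono) auto
        also have "\<dots> = l e / 2 * (M/N) powr (q e + 1)"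
          using N elim by (simp add: powr_divide)
        also have "\<dots> \<le> l e / 2 * z powr (q e + 1)"
          using lpos[OF eE] z N elim qpos[OF eE] by (intro mult_left_mono powr_mono2) auto
        also have "\<dots> = z * ((1-1/2)*l e*z powr q e)"
          using z0 by (simp add: powr_add)
        also have "\<dots> \<le> z * c e z" using Z(2)[OF z0(2)] z0 by (intro mult_left_mono) auto
        finally show "k * M powr (d+1) \<le> z * c e z" .
      qed
    qed
  qed
  hence "eventually (\<lambda>M. \<forall>e\<in>{e\<in>E. q e \<ge> d}. \<forall>z\<ge>M/N. k * M powr (d+1) \<le> z * c e z) at_top"
    using finE by (intro eventually_ball_finite) auto
  moreover have "eventually (\<lambda>M::real. M > 0) at_top" by (rule eventually_gt_at_top)
  ultimately have "eventually (\<lambda>M. k * M powr (d+1) \<le> opt_cost E c P M) at_top"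
  proof eventually_elim
    case (elim M)
    show ?case
    proof (rule opt_ge)
      show "0 \<le> M" using elim by simp
      fix g assume g: "feasible P M g"
      obtain p where p: "p \<in> P" "g p \<ge> M/N"
      proof (rule ccontr)
        assume "\<not> thesis"
        hence "\<forall>p\<in>P. g p < M/N" using that by force
        hence "(\<Sum>p\<in>P. g p) < (\<Sum>p\<in>P. M/N)" using finP Pne by (intro sum_strict_mono) auto
        also have "\<dots> = M" using N unfolding N_def by simp
        finally show False using g by (simp add: feasible_def)
      qed
      obtain e where e: "e \<in> set p" "q e \<ge> d" using d_edge[OF p(1)] by auto
      have eE: "e \<in> E" using paths p e by auto
      have "M/N \<le> load P g e" using load_ge[OF g p(1) e(1)] p by simp
      hence "k * M powr (d+1) \<le> load P g e * c e (load P g e)" using elim eE e by auto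
      also have "\<dots> \<le> social_cost E c (load P g)" by (rule term_le_social[OF g eE])
      finally show "k * M powr (d+1) \<le> social_cost E c (load P g)" .
    qed
  qed
  thus ?thesis using kpos by blast
qed

end


context rg begin

lemma ev_R:
  assumes dpos: "\<delta> > 0"
  shows "eventually (\<lambda>M. \<forall>g. feasible P M g \<longrightarrow>
      social_cost E c (load P g) \<le> social_cost E c (load P (feq M)) + 1 \<longrightarrow>
      (\<forall>e\<in>{e\<in>E. q e \<noteq> d}. load P g e * c e (x M e) \<le> \<delta> * M powr (d+1))) at_top"
proof -
  obtain K where K: "K \<ge> 0" "eventually (\<lambda>M. M \<ge> 1 \<and> Cm M \<le> K * M powr d \<and> (\<forall>e\<in>E. c e (x M e) \<le> K * M powr d)) at_top"
    using ev_cx by blast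
  have "\<forall>e\<in>{e\<in>E. q e \<noteq> d}. eventually (\<lambda>M. \<forall>g. feasible P M g \<longrightarrow>
      social_cost E c (load P g) \<le> social_cost E c (load P (feq M)) + 1 \<longrightarrow>
      load P g e * c e (x M e) \<le> \<delta> * M powr (d+1)) at_top"
  proof
    fix e assume "e \<in> {e\<in>E. q e \<noteq> d}"
    hence eE: "e \<in> E" and qd: "q e \<noteq> d" by auto
    show "eventually (\<lambda>M. \<forall>g. feasible P M g \<longrightarrow>
      social_cost E c (load P g) \<le> social_cost E c (load P (feq M)) + 1 \<longrightarrow>
      load P g e * c e (x M e) \<le> \<delta> * M powr (d+1)) at_top"
    proof (cases "q e < d")
      case True
      obtain Z where Z: "Z \<ge> 1" "\<And>z. z \<ge> Z \<Longrightarrow> c e z \<le> (1+1)*l e*z powr q e"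
        using edge_asym[OF qpos[OF eE] lpos[OF eE] lim[OF eE], of 1] by auto
      have "eventually (\<lambda>M. (2 * l e) * M powr (q e + 1) \<le> \<delta> * M powr (d+1)) at_top"
        using True dpos by (intro ev_dom) auto
      thus ?thesis using eventually_ge_at_top[of Z]
      proof eventually_elim
        case (elim M)
        show ?case
        proof (intro allI impI)
          fix g assume g: "feasible P M g"
          have M0: "M > 0" using elim Z by simp
          have "load P g e * c e (x M e) \<le> M * c e M"
            using load_le[OF g] load_nonneg[OF g] load_le[OF feq_feas[OF M0]] load_nonneg[OF feq_feas[OF M0]]
              nonneg[OF eE] monoD'[OF eE] M0 unfolding x_def
            by (intro mult_mono) auto
          also have "\<dots> \<le> M * (2 * l e * M powr q e)" using Z elim by (intro mult_left_mono) auto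
          also have "\<dots> = (2 * l e) * M powr (q e + 1)" using M0 by (simp add: powr_add)
          also have "\<dots> \<le> \<delta> * M powr (d+1)" using elim by simp
          finally show "load P g e * c e (x M e) \<le> \<delta> * M powr (d+1)" .
        qed
      qed
    next
      case False
      hence qg: "q e > d" using qd by simp
      define \<theta> where "\<theta> = \<delta> / (K+1)"
      have th: "\<theta> > 0" unfolding \<theta>_def using dpos K by simp
      obtain Z where Z: "Z \<ge> 1" "\<And>z. z \<ge> Z \<Longrightarrow> (1-1/2)*l e*z powr q e \<le> c e z"
        using edge_asym[OF qpos[OF eE] lpos[OF eE] lim[OF eE], of "1/2"] by auto
      define B where "B = 2 * (K+1) / l e"
      have sl: "eventually (\<lambda>M::real. \<forall>z\<ge>0. z powr (q e + 1) \<le> B * M powr (d+1) \<longrightarrow> z \<le> \<theta>*M) at_top"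
        using qg d_nonneg th by (intro small_load) auto
      show ?thesis using sl K(2) eventually_ge_at_top[of "Z/\<theta>"]
      proof eventually_elim
        case (elim M)
        have M0: "M > 0" "M \<ge> 1" using elim by auto
        have Md: "M powr (d+1) \<ge> 1" using M0 d_nonneg by (simp add: ge_one_powr_ge_zero)
        have ZM: "Z \<le> \<theta> * M" using elim th by (simp add: field_simps)
        show ?case
        proof (intro allI impI)
          fix g assume g: "feasible P M g"
            and sg: "social_cost E c (load P g) \<le> social_cost E c (load P (feq M)) + 1"
          define y where "y = load P g e"
          have y0: "y \<ge> 0" unfolding y_def using load_nonneg[OF g] .
          have yth: "y \<le> \<theta> * M"
          proof (cases "y \<ge> Z")
            case False thus ?thesis using ZM by simp
          next
            case True
            have "(l e / 2) * y powr (q e + 1) = y * ((1-1/2)*l e*y powr q e)"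
              using True Z by (simp add: powr_add)
            also have "\<dots> \<le> y * c e y" using Z(2)[OF True] y0 by (intro mult_left_mono) auto
            also have "\<dots> \<le> social_cost E c (load P g)" unfolding y_def by (rule term_le_social[OF g eE])
            also have "\<dots> \<le> M * Cm M + 1" using sg Eq_eq[OF M0(1)] by simp
            also have "\<dots> \<le> M * (K * M powr d) + 1" using elim M0 by (intro add_right_mono mult_left_mono) auto
            also have "\<dots> = K * M powr (d+1) + 1" using M0 by (simp add: powr_add)
            also have "\<dots> \<le> (K+1) * M powr (d+1)" using Md by (simp add: distrib_right)
            finally have "y powr (q e + 1) \<le> B * M powr (d+1)"
              unfolding B_def using lpos[OF eE] by (simp add: field_simps)
            thus ?thesis using elim y0 by blast
          qed
          have "y * c e (x M e) \<le> (\<theta> * M) * (K * M powr d)"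
            using yth y0 elim eE nonneg[OF eE] load_nonneg[OF feq_feas[OF M0(1)]] unfolding x_def
            by (intro mult_mono) auto
          also have "\<dots> = (\<theta> * K) * M powr (d+1)" using M0 by (simp add: powr_add)
          also have "\<dots> \<le> \<delta> * M powr (d+1)"
          proof (intro mult_right_mono)
            have "\<theta> * K \<le> \<theta> * (K+1)" using th by simp
            also have "\<dots> = \<delta>" unfolding \<theta>_def using K by simp
            finally show "\<theta> * K \<le> \<delta>" .
          qed simp
          finally show "load P g e * c e (x M e) \<le> \<delta> * M powr (d+1)" unfolding y_def .
        qed
      qed
    qed
  qed
  hence "eventually (\<lambda>M. \<forall>e\<in>{e\<in>E. q e \<noteq> d}. \<forall>g. feasible P M g \<longrightarrow>
      social_cost E c (load P g) \<le> social_cost E c (load P (feq M)) + 1 \<longrightarrow>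
      load P g e * c e (x M e) \<le> \<delta> * M powr (d+1)) at_top"
    using finE by (intro eventually_ball_finite) auto
  thus ?thesis by (rule eventually_mono) blast
qed

end



lemma final_alg:
  fixes Eq Opt G R2 X Y CZ W k d \<tau> \<eta> \<delta> :: real
  assumes h1: "Eq \<le> G + R2"
    and h2: "G \<le> (1+\<eta>)/(d+1) * (d*X + d*CZ + Y)"
    and h3: "(1-\<eta>) * X \<le> Eq + CZ"
    and h4: "(1-\<eta>) * Y \<le> Opt + 1 + CZ"
    and h5: "R2 \<le> \<delta> * W" and R0: "R2 \<ge> 0"
    and h6: "(1+\<eta>)*(2*d*CZ + CZ + 1) \<le> \<delta> * W"
    and h7: "k * W \<le> Opt" and k: "k > 0" and dl: "\<delta> = \<tau>*k/(4*(d+2))"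
    and et: "\<eta> = \<tau>/(4*(d+1))" and t: "0 < \<tau>" "\<tau> \<le> 1/8" and d: "d \<ge> 0"
    and E0: "Eq \<ge> 0" and X0: "X \<ge> 0" and Y0: "Y \<ge> 0" and CZ0: "CZ \<ge> 0" and W0: "W \<ge> 0"
  shows "Eq \<le> (1+8*\<tau>) * Opt"
proof -
  have et1: "0 < \<eta>" unfolding et using t d by simp
  have etq: "\<eta> \<le> \<tau>/4" unfolding et using t d by (intro divide_left_mono) auto
  hence et0: "0 < \<eta>" "\<eta> \<le> 1/32" using et1 t by auto
  have a: "(d+1) * Eq \<le> (1+\<eta>)*(d*X + d*CZ + Y) + (d+1) * R2"
  proof -
    have "(d+1) * Eq \<le> (d+1) * (G + R2)" using h1 d by (intro mult_left_mono) auto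
    also have "(d+1) * G \<le> (1+\<eta>)*(d*X + d*CZ + Y)" using h2 d by (simp add: field_simps)
    ultimately show ?thesis by (simp add: distrib_left)
  qed
  have b: "(1-\<eta>)*((d+1) * Eq) \<le> (1+\<eta>)*(d*((1-\<eta>)*X) + d*CZ + ((1-\<eta>)*Y)) + (d+1) * R2"
  proof -
    have "(1-\<eta>)*((d+1) * Eq) \<le> (1-\<eta>)*((1+\<eta>)*(d*X + d*CZ + Y) + (d+1) * R2)"
      using a et0 by (intro mult_left_mono) auto
    also have "\<dots> = (1+\<eta>)*(d*((1-\<eta>)*X) + (1-\<eta>)*d*CZ + ((1-\<eta>)*Y)) + (1-\<eta>)*((d+1) * R2)"
      by (simp add: algebra_simps)
    also have "(1-\<eta>)*d*CZ \<le> d*CZ"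
    proof -
      have "0 \<le> \<eta> * (d*CZ)" using et0 d CZ0 by simp
      thus ?thesis by (simp add: algebra_simps)
    qed
    also have "(1-\<eta>)*((d+1) * R2) \<le> (d+1) * R2"
    proof -
      have "0 \<le> \<eta> * ((d+1)*R2)" using et0 d R0 by simp
      thus ?thesis by (simp add: algebra_simps)
    qed
    finally show ?thesis using et0 by (simp add: mult_left_mono)
  qed
  have c: "(1-\<eta>)*((d+1) * Eq) \<le> (1+\<eta>)*(d*(Eq + CZ) + d*CZ + (Opt + 1 + CZ)) + (d+1) * R2"
  proof -
    have "d*((1-\<eta>)*X) \<le> d*(Eq + CZ)" using h3 d by (intro mult_left_mono) auto
    hence "d*((1-\<eta>)*X) + d*CZ + ((1-\<eta>)*Y) \<le> d*(Eq + CZ) + d*CZ + (Opt + 1 + CZ)" using h4 by linarith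
    hence "(1+\<eta>)*(d*((1-\<eta>)*X) + d*CZ + ((1-\<eta>)*Y)) \<le> (1+\<eta>)*(d*(Eq + CZ) + d*CZ + (Opt + 1 + CZ))"
      using et0 by (intro mult_left_mono) auto
    thus ?thesis using b by linarith
  qed
  have e: "(1 - \<eta>*(2*d+1)) * Eq \<le> (1+\<eta>) * Opt + (1+\<eta>)*(2*d*CZ + CZ + 1) + (d+1) * R2"
    using c by (simp add: algebra_simps)
  have f: "(1+\<eta>)*(2*d*CZ + CZ + 1) + (d+1) * R2 \<le> (d+2) * (\<delta> * W)"
  proof -
    have "(d+1) * R2 \<le> (d+1) * (\<delta> * W)" using h5 d by (intro mult_left_mono) auto
    thus ?thesis using h6 by (simp add: algebra_simps)
  qed
  have g: "(d+2) * (\<delta> * W) \<le> \<tau>/4 * Opt"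
  proof -
    have "(d+2)*\<delta> = \<tau>*k/4" using dl d by (simp add: field_simps)
    hence "(d+2) * (\<delta> * W) = \<tau>/4 * (k * W)" by (metis mult.assoc mult.commute times_divide_eq_left)
    also have "\<dots> \<le> \<tau>/4 * Opt" using h7 t by (intro mult_left_mono) auto
    finally show ?thesis .
  qed
  have O0: "Opt \<ge> 0" using h7 k W0 by (smt (verit) mult_nonneg_nonneg)
  have h: "(1+\<eta>) * Opt \<le> (1 + \<tau>/4) * Opt" using O0 etq
    by (intro mult_right_mono) auto
  have i: "(1 - \<tau>/2) * Eq \<le> (1 - \<eta>*(2*d+1)) * Eq"
  proof (intro mult_right_mono)
    have "\<eta>*(2*d+1) \<le> \<eta>*(2*(d+1))" using et0 by (intro mult_left_mono) auto
    also have "\<dots> = \<tau>/2" using et d by (simp add: field_simps)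
    finally show "1 - \<tau>/2 \<le> 1 - \<eta>*(2*d+1)" by simp
  qed (rule E0)
  have j: "(1 - \<tau>/2) * Eq \<le> (1 + \<tau>/2) * Opt" using e f g h i by (simp add: algebra_simps)
  have "(1 + \<tau>/2) * Opt \<le> (1 - \<tau>/2) * ((1+8*\<tau>) * Opt)"
  proof -
    have tt: "\<tau>*\<tau> \<le> \<tau>*(1/8)" using t by (intro mult_left_mono) auto
    have "(1 - \<tau>/2) * (1+8*\<tau>) = 1 + 15/2*\<tau> - 4*(\<tau>*\<tau>)" by (simp add: algebra_simps)
    hence "(1 + \<tau>/2) \<le> (1 - \<tau>/2) * (1+8*\<tau>)" using tt t by linarith
    thus ?thesis using O0 by (metis mult.assoc mult_right_mono)
  qed
  with j have "(1 - \<tau>/2) * Eq \<le> (1 - \<tau>/2) * ((1+8*\<tau>) * Opt)" by linarith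
  thus ?thesis using t by (simp add: mult_le_cancel_left)
qed


lemma alg1: fixes A L a b yy d :: real
  shows "(A*L) * (d/(d+1) * (a+b) + yy/(d+1)) = A/(d+1) * (d*(L*a) + d*(L*b) + L*yy)"
proof -
  have 1: "d/(d+1) * (a+b) + yy/(d+1) = (d*a + d*b + yy)/(d+1)" by (simp add: add_divide_distrib algebra_simps)
  have 2: "(A*L)*(d*a+d*b+yy) = A*(d*(L*a)+d*(L*b)+L*yy)" by (simp add: algebra_simps)
  have "(A*L) * ((d*a + d*b + yy)/(d+1)) = ((A*L)*(d*a+d*b+yy))/(d+1)" by simp
  also have "\<dots> = (A*(d*(L*a)+d*(L*b)+L*yy))/(d+1)" using 2 by simp
  also have "\<dots> = A/(d+1) * (d*(L*a) + d*(L*b) + L*yy)" by simp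
  finally show ?thesis using 1 by simp
qed

context rg begin

lemma main_est:
  assumes t: "0 < \<tau>" "\<tau> \<le> 1/8"
  shows "eventually (\<lambda>M. opt_cost E c P M > 0 \<and>
     social_cost E c (load P (feq M)) \<le> (1+8*\<tau>) * opt_cost E c P M) at_top"
proof -
  define \<eta> where "\<eta> = \<tau>/(4*(d+1))"
  have d0: "d \<ge> 0" by (rule d_nonneg)
  have et1: "0 < \<eta>" unfolding \<eta>_def using t d0 by simp
  have "\<eta> \<le> \<tau>/4" unfolding \<eta>_def using t d0 by (intro divide_left_mono) auto
  hence et2: "\<eta> \<le> 1" using t by simp
  define D where "D = E \<inter> {e. q e = d}"
  define ND where "ND = E - {e. q e = d}"
  have DE: "D \<subseteq> E" "finite D" unfolding D_def using finE by auto
  have qD: "\<And>e. e \<in> D \<Longrightarrow> q e = d" "\<And>e. e \<in> D \<Longrightarrow> e \<in> E" unfolding D_def by auto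
  have "\<forall>e\<in>D. \<exists>Z\<ge>1. \<forall>z\<ge>Z. (1-\<eta>)*l e*z powr d \<le> c e z \<and> c e z \<le> (1+\<eta>)*l e*z powr d"
  proof
    fix e assume e: "e \<in> D"
    show "\<exists>Z\<ge>1. \<forall>z\<ge>Z. (1-\<eta>)*l e*z powr d \<le> c e z \<and> c e z \<le> (1+\<eta>)*l e*z powr d"
      using edge_asym[OF qpos[OF qD(2)[OF e]] lpos[OF qD(2)[OF e]] lim[OF qD(2)[OF e]] et1] qD(1)[OF e]
      by simp
  qed
  then obtain Zf where Zf: "\<And>e. e \<in> D \<Longrightarrow> Zf e \<ge> 1"
    "\<And>e z. e \<in> D \<Longrightarrow> z \<ge> Zf e \<Longrightarrow> (1-\<eta>)*l e*z powr d \<le> c e z \<and> c e z \<le> (1+\<eta>)*l e*z powr d"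
    by metis
  have pA: "c e z \<le> (1+\<eta>)*l e*(max z (Zf e)) powr d" if e: "e \<in> D" and z: "z \<ge> 0" for e z
  proof -
    have "c e z \<le> c e (max z (Zf e))" using qD(2)[OF e] z by (intro monoD') auto
    also have "\<dots> \<le> (1+\<eta>)*l e*(max z (Zf e)) powr d" using Zf(2)[OF e, of "max z (Zf e)"] by simp
    finally show ?thesis .
  qed
  have pB: "(1-\<eta>)*(l e*z powr (d+1)) \<le> z * c e z + l e * Zf e powr (d+1)" if e: "e \<in> D" and z: "z \<ge> 0" for e z
  proof -
    have eE: "e \<in> E" using qD(2)[OF e] .
    have lp: "l e > 0" using lpos[OF eE] .
    have A0: "0 \<le> l e * Zf e powr (d+1)" using lp by simp
    have B0: "0 \<le> z * c e z" using z nonneg[OF eE] by simp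
    show ?thesis
    proof (cases "z \<ge> Zf e")
      case True
      have "(1-\<eta>)*(l e*z powr (d+1)) = z * ((1-\<eta>)*l e*z powr d)" using z True Zf(1)[OF e]
        by (simp add: powr_add)
      also have "\<dots> \<le> z * c e z" using Zf(2)[OF e True] z by (intro mult_left_mono) auto
      finally show ?thesis using A0 by linarith
    next
      case False
      have "(1-\<eta>)*(l e*z powr (d+1)) \<le> 1 * (l e*z powr (d+1))"
        using et1 lp by (intro mult_right_mono) auto
      also have "\<dots> \<le> l e * Zf e powr (d+1)" using False z lp d0 by (auto intro!: mult_left_mono powr_mono2)
      finally show ?thesis using B0 by linarith
    qed
  qed
  have pC: "y * c e xx \<le> (1+\<eta>)/(d+1) * (d*(l e*xx powr (d+1)) + d*(l e*Zf e powr (d+1)) + l e*y powr (d+1))"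
    if e: "e \<in> D" and xx: "xx \<ge> 0" and y: "y \<ge> 0" for e xx y
  proof -
    have lp: "l e > 0" using lpos[OF qD(2)[OF e]] .
    define m where "m = max xx (Zf e)"
    have m0: "m \<ge> 0" unfolding m_def using xx by simp
    have mm: "m powr (d+1) \<le> xx powr (d+1) + Zf e powr (d+1)" unfolding m_def by (cases "xx \<le> Zf e") auto
    have "y * c e xx \<le> y * ((1+\<eta>)*l e*m powr d)" using pA[OF e xx] y unfolding m_def by (intro mult_left_mono) auto
    also have "\<dots> = ((1+\<eta>)*l e) * (y * m powr d)" by simp
    also have "\<dots> \<le> ((1+\<eta>)*l e) * (d/(d+1) * m powr (d+1) + y powr (d+1) / (d+1))"
      using young_d[OF m0 y d0] et1 lp by (intro mult_left_mono) auto
    also have "\<dots> \<le> ((1+\<eta>)*l e) * (d/(d+1) * (xx powr (d+1) + Zf e powr (d+1)) + y powr (d+1) / (d+1))"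
      using mm et1 lp d0 by (intro mult_left_mono add_right_mono) (auto intro: mult_left_mono)
    also have "\<dots> = (1+\<eta>)/(d+1) * (d*(l e*xx powr (d+1)) + d*(l e*Zf e powr (d+1)) + l e*y powr (d+1))"
      by (rule alg1)
    finally show ?thesis .
  qed
  define CZ where "CZ = (\<Sum>e\<in>D. l e * Zf e powr (d+1))"
  have CZ0: "CZ \<ge> 0" unfolding CZ_def
    by (intro sum_nonneg mult_nonneg_nonneg) (auto intro: less_imp_le lpos qD(2))
  obtain k where k: "k > 0" "eventually (\<lambda>M. k * M powr (d+1) \<le> opt_cost E c P M) at_top"
    using ev_opt by blast
  define \<delta> where "\<delta> = \<tau>*k/(4*(d+2))"
  have dp: "\<delta> > 0" unfolding \<delta>_def using t k d0 by simp
  define \<delta>' where "\<delta>' = \<delta> / (card E + 1)"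
  have dp': "\<delta>' > 0" unfolding \<delta>'_def using dp by simp
  define Kc where "Kc = (1+\<eta>)*(2*d*CZ + CZ + 1)"
  have evK: "eventually (\<lambda>M. Kc * M powr 0 \<le> \<delta> * M powr (d+1)) at_top"
    using dp d0 by (intro ev_dom) auto
  show ?thesis using k(2) ev_R[OF dp'] evK eventually_ge_at_top[of 1]
  proof eventually_elim
    case (elim M)
    have M0: "M > 0" using elim by simp
    define W where "W = M powr (d+1)"
    have W0: "W \<ge> 0" unfolding W_def by simp
    define Opt where "Opt = opt_cost E c P M"
    define Eq where "Eq = social_cost E c (load P (feq M))"
    have fM: "feasible P M (feq M)" by (rule feq_feas[OF M0])
    obtain g where g: "feasible P M g" "social_cost E c (load P g) \<le> Opt + 1"
      using opt_near[of M] M0 unfolding Opt_def by auto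
    have OE: "Opt \<le> Eq" unfolding Opt_def Eq_def by (rule opt_le[OF fM])
    have kO: "k * W \<le> Opt" using elim unfolding W_def Opt_def by simp
    have Opos: "Opt > 0" using k(1) M0 kO unfolding W_def by (smt (verit) mult_pos_pos powr_gt_zero)
    have sg: "social_cost E c (load P g) \<le> Eq + 1" using g OE by simp
    have xn: "\<And>e. x M e \<ge> 0" unfolding x_def using load_nonneg[OF fM] .
    have yn: "\<And>e. load P g e \<ge> 0" using load_nonneg[OF g(1)] .
    define G where "G = (\<Sum>e\<in>D. load P g e * c e (x M e))"
    define R2 where "R2 = (\<Sum>e\<in>ND. load P g e * c e (x M e))"
    have split: "(\<Sum>e\<in>E. load P g e * c e (x M e)) = G + R2"
      unfolding G_def R2_def D_def ND_def using finE by (rule sum.Int_Diff)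
    have h1: "Eq \<le> G + R2" using VI[OF M0 g(1)] split unfolding Eq_def by simp
    have R0: "R2 \<ge> 0" unfolding R2_def ND_def using yn xn nonneg by (intro sum_nonneg) auto
    have h5: "R2 \<le> \<delta> * W"
    proof -
      have "R2 \<le> real (card ND) * (\<delta>' * W)" unfolding R2_def
        using elim g(1) sg unfolding W_def Eq_def ND_def by (intro sum_bounded_above) auto
      also have "\<dots> \<le> real (card E + 1) * (\<delta>' * W)"
      proof (intro mult_right_mono)
        have "card ND \<le> card E" unfolding ND_def using finE by (intro card_mono) auto
        thus "real (card ND) \<le> real (card E + 1)" by simp
      qed (use dp' W0 in simp)
      also have "\<dots> = \<delta> * W" unfolding \<delta>'_def by simp
      finally show ?thesis .
    qed
    have h6: "(1+\<eta>)*(2*d*CZ + CZ + 1) \<le> \<delta> * W" using elim M0 unfolding Kc_def W_def by simp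
    define X where "X = (\<Sum>e\<in>D. l e * x M e powr (d+1))"
    define Y where "Y = (\<Sum>e\<in>D. l e * load P g e powr (d+1))"
    have X0: "X \<ge> 0" unfolding X_def
      by (intro sum_nonneg mult_nonneg_nonneg) (auto intro: less_imp_le lpos qD(2))
    have Y0: "Y \<ge> 0" unfolding Y_def
      by (intro sum_nonneg mult_nonneg_nonneg) (auto intro: less_imp_le lpos qD(2))
    have h2: "G \<le> (1+\<eta>)/(d+1) * (d*X + d*CZ + Y)"
    proof -
      have "G \<le> (\<Sum>e\<in>D. (1+\<eta>)/(d+1) * (d*(l e*x M e powr (d+1)) + d*(l e*Zf e powr (d+1)) + l e*load P g e powr (d+1)))"
        unfolding G_def using pC xn yn by (intro sum_mono) auto
      also have "\<dots> = (1+\<eta>)/(d+1) * (\<Sum>e\<in>D. d*(l e*x M e powr (d+1)) + d*(l e*Zf e powr (d+1)) + l e*load P g e powr (d+1))"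
        by (rule sum_distrib_left[symmetric])
      also have "(\<Sum>e\<in>D. d*(l e*x M e powr (d+1)) + d*(l e*Zf e powr (d+1)) + l e*load P g e powr (d+1)) = d*X + d*CZ + Y"
        unfolding X_def Y_def CZ_def by (simp add: sum.distrib sum_distrib_left)
      finally show ?thesis .
    qed
    have h3: "(1-\<eta>) * X \<le> Eq + CZ"
    proof -
      have "(1-\<eta>) * X = (\<Sum>e\<in>D. (1-\<eta>)*(l e * x M e powr (d+1)))" unfolding X_def by (simp add: sum_distrib_left)
      also have "\<dots> \<le> (\<Sum>e\<in>D. x M e * c e (x M e) + l e * Zf e powr (d+1))"
        using pB xn by (intro sum_mono) auto
      also have "\<dots> = (\<Sum>e\<in>D. x M e * c e (x M e)) + CZ" unfolding CZ_def by (simp add: sum.distrib)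
      also have "(\<Sum>e\<in>D. x M e * c e (x M e)) \<le> Eq"
        unfolding Eq_def social_cost_def x_def using DE finE load_nonneg[OF fM] nonneg
        by (intro sum_mono2) auto
      finally show ?thesis by simp
    qed
    have h4: "(1-\<eta>) * Y \<le> Opt + 1 + CZ"
    proof -
      have "(1-\<eta>) * Y = (\<Sum>e\<in>D. (1-\<eta>)*(l e * load P g e powr (d+1)))" unfolding Y_def by (simp add: sum_distrib_left)
      also have "\<dots> \<le> (\<Sum>e\<in>D. load P g e * c e (load P g e) + l e * Zf e powr (d+1))"
        using pB yn by (intro sum_mono) auto
      also have "\<dots> = (\<Sum>e\<in>D. load P g e * c e (load P g e)) + CZ" unfolding CZ_def by (simp add: sum.distrib)
      also have "(\<Sum>e\<in>D. load P g e * c e (load P g e)) \<le> social_cost E c (load P g)"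
        unfolding social_cost_def using DE finE yn nonneg
        by (intro sum_mono2) auto
      finally show ?thesis using g(2) by simp
    qed
    have E0: "Eq \<ge> 0" unfolding Eq_def by (rule social_nonneg[OF fM])
    have "Eq \<le> (1+8*\<tau>) * Opt"
      by (rule final_alg[OF h1 h2 h3 h4 h5 R0 h6 kO k(1) \<delta>_def \<eta>_def t d0 E0 X0 Y0 CZ0 W0])
    thus ?case using Opos unfolding Opt_def Eq_def by simp
  qed
qed

end

theorem corollary4p8:
  fixes E :: "'e set" and src tgt :: "'e \<Rightarrow> 'v" and orig dest :: 'v
    and P :: "'e list set" and c :: "'e \<Rightarrow> real \<Rightarrow> real"
    and feq :: "real \<Rightarrow> 'e list \<Rightarrow> real"
  assumes "finite E"
    and "finite P" and "P \<noteq> {}"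
    and "\<forall>p\<in>P. is_od_path src tgt E orig dest p"
    and "\<forall>e\<in>E. continuous_on {0..} (c e)"
    and "\<forall>e\<in>E. mono_on {0..} (c e)"
    and "\<forall>e\<in>E. \<forall>x\<ge>0. c e x \<ge> 0"
    and "\<forall>e\<in>E. \<exists>q::real. q \<ge> 0 \<and> (\<exists>l::real. l \<noteq> 0 \<and>
            ((\<lambda>x. c e x / x powr q) \<longlongrightarrow> l) at_top)"
    and "\<forall>M>0. wardrop_eq c P M (feq M)"
  shows "((\<lambda>M. poa E c P M (feq M)) \<longlongrightarrow> 1) at_top"
proof -
  note A = assms
  obtain q l where ql: "\<And>e. e \<in> E \<Longrightarrow> q e \<ge> 0 \<and> l e \<noteq> 0 \<and> ((\<lambda>x. c e x / x powr q e) \<longlongrightarrow> l e) at_top"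
    using A(8) by metis
  have lpos: "l e > 0" if e: "e \<in> E" for e
  proof -
    have "eventually (\<lambda>x. 0 \<le> c e x / x powr q e) at_top"
      using eventually_ge_at_top[of 0] by eventually_elim (use A(7) e in simp)
    hence "0 \<le> l e" using ql[OF e] by (intro tendsto_lowerbound[of "\<lambda>x. c e x / x powr q e"]) auto
    thus ?thesis using ql[OF e] by auto
  qed
  interpret rg E P c feq q l
  proof
    show "\<And>p. p \<in> P \<Longrightarrow> p \<noteq> [] \<and> set p \<subseteq> E" using A(4) by (auto simp: is_od_path_def)
  qed (use A ql lpos in auto)
  show ?thesis
  proof (rule tendstoI)
    fix \<epsilon> :: real assume ep: "\<epsilon> > 0"
    define \<tau> where "\<tau> = min (\<epsilon>/16) (1/8)"
    have t: "0 < \<tau>" "\<tau> \<le> 1/8" "8*\<tau> < \<epsilon>" unfolding \<tau>_def using ep by auto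
    show "eventually (\<lambda>M. dist (poa E c P M (feq M)) 1 < \<epsilon>) at_top"
      using main_est[OF t(1,2)] eventually_gt_at_top[of 0]
    proof eventually_elim
      case (elim M)
      define O' where "O' = opt_cost E c P M"
      define Q' where "Q' = social_cost E c (load P (feq M))"
      have O0: "O' > 0" and QO: "Q' \<le> (1+8*\<tau>) * O'" using elim unfolding O'_def Q'_def by auto
      have OQ: "O' \<le> Q'" unfolding O'_def Q'_def by (rule opt_le[OF feq_feas]) (use elim in simp)
      have p: "poa E c P M (feq M) = Q' / O'" unfolding poa_def O'_def Q'_def using O0 O'_def by simp
      have "1 \<le> Q' / O'" using OQ O0 by simp
      moreover have "Q' / O' \<le> 1 + 8*\<tau>" using QO O0 by (simp add: divide_le_eq)
      ultimately show ?case using p t by (simp add: dist_real_def)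
    qed
  qed
qed

end
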